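(* Let $V$ be a $K$-vector space and $A=\mathrm{Tricub}(V)$ the free cubical trialgebra on $V$. Consider the chain complex $$C^{\mathrm{Tricub}}_n(A)=K[Q_{n-1}]\otimes A^{\otimes n}\quad(n\ge1),\qquad d=\sum_{i=1}^{n-1}(-1)^i d_i,$$ where, for $X=(X_1,\dots,X_{n-1})\in Q_{n-1}$, $$d_i(X;a_1,\dots,a_n)=(d_i(X);a_1,\dots,a_i\circ_i^X a_{i+1},\dots,a_n).$$ Here $d_i(X)\in Q_{n-2}$ is obtained by deleting the coordinate $X_i$, and $\circ_i^X$ is $\dashv$, $\perp$ or $\vdash$ according as $X_i=-1$, $0$ or $+1$. Then the homology of this complex is $V$ in degree $1$ and $0$ in all degrees $\ge2$.
   Context: A cubical trialgebra is a $K$-vector space $A$ with three bilinear operations $\dashv,\vdash,\perp$ satisfying the nine relations $(x\circ_1y)\circ_2z=x\circ_1(y\circ_2z)$ for all $\circ_1,\circ_2\in\{\dashv,\vdash,\perp\}$. $\mathrm{Tricub}(V)$ denotes the free cubical trialgebra on $V$. $Q_m=\{-1,0,+1\}^m$, and $K[Q_m]$ is the vector space with basis $Q_m$. *)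

theory Defs
  imports Main
begin

text \<open>Coordinates of the cube Q_m = {-1,0,+1}^m: Lt = -1 (left operation),
  Mid = 0 (middle operation), Rt = +1 (right operation).\<close>
datatype cube = Lt | Mid | Rt

text \<open>Monomials of the free cubical trialgebra Tricub(V) on V = K[B] (B a basis of V,
  given by the type 'b): a monomial (X; b_1,...,b_k) with X in Q_(k-1) is encoded as
  (b_1, [(X_1,b_2),...,(X_(k-1),b_k)]).  Tricub(V) = free vector space on these monomials.\<close>
type_synonym 'b mono = "'b \<times> (cube \<times> 'b) list"

text \<open>The three operations on monomials: (X;v) o (Y;w) = (X,s,Y; v,w), where s = -1,0,+1
  for the left, middle, right operation respectively.\<close>
fun mmul :: "cube \<Rightarrow> 'b mono \<Rightarrow> 'b mono \<Rightarrow> 'b mono" where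
  "mmul s (b, L) (c, M) = (b, L @ (s, c) # M)"

text \<open>Basis elements of C_n = K[Q_(n-1)] (x) A^(x)n: pairs (X, [a_1,...,a_n]) with
  length X = n-1 and a_i monomials of A.\<close>
type_synonym 'b cbasis = "cube list \<times> 'b mono list"

definition face :: "nat \<Rightarrow> 'b cbasis \<Rightarrow> 'b cbasis" where
  "face i x = (take (i - 1) (fst x) @ drop i (fst x),
               take (i - 1) (snd x) @ [mmul (fst x ! (i - 1)) (snd x ! (i - 1)) (snd x ! i)]
                 @ drop (i + 1) (snd x))"

definition chains :: "nat \<Rightarrow> ('b cbasis \<Rightarrow> 'k::field) set" where
  "chains n = {f. finite {x. f x \<noteq> 0} \<and>
                  (\<forall>x. f x \<noteq> 0 \<longrightarrow> length (fst x) + 1 = n \<and> length (snd x) = n)}"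

definition bd :: "('b cbasis \<Rightarrow> 'k::field) \<Rightarrow> ('b cbasis \<Rightarrow> 'k)" where
  "bd f = (\<lambda>y. \<Sum>x\<in>{x. f x \<noteq> 0}. f x *
              (\<Sum>i\<in>{1..<length (snd x)}. if face i x = y then (-1) ^ i else 0))"

definition inclV :: "('b \<Rightarrow> 'k::field) \<Rightarrow> ('b cbasis \<Rightarrow> 'k)" where
  "inclV v = (\<lambda>x. if fst x = [] \<and> (\<exists>b. snd x = [(b, [])]) then v (fst (hd (snd x))) else 0)"

end

theory Submission
  imports Defs
begin

fun spl :: "'b cbasis \<Rightarrow> bool" where
  "spl (X, (b, p # M) # as) = True"
| "spl _ = False"

fun splt :: "'b cbasis \<Rightarrow> 'b cbasis" where
  "splt (X, (b, (s, c) # M) # as) = (s # X, (b, []) # (c, M) # as)"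
| "splt x = x"

fun issp :: "'b cbasis \<Rightarrow> bool" where
  "issp (s # X, (b, []) # (c, M) # as) = True"
| "issp _ = False"

fun unsp :: "'b cbasis \<Rightarrow> 'b cbasis" where
  "unsp (s # X, (b, []) # (c, M) # as) = (X, (b, (s, c) # M) # as)"
| "unsp y = y"

definition wf :: "'b cbasis \<Rightarrow> bool" where
  "wf x = (length (fst x) + 1 = length (snd x))"

definition hh :: "('b cbasis \<Rightarrow> 'k::field) \<Rightarrow> ('b cbasis \<Rightarrow> 'k)" where
  "hh f = (\<lambda>y. if issp y then - f (unsp y) else 0)"

definition cbd :: "'b cbasis \<Rightarrow> 'b cbasis \<Rightarrow> 'k::field" where
  "cbd x y = (\<Sum>i\<in>{1..<length (snd x)}. if face i x = y then (-1) ^ i else 0)"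

lemma bd_cbd: "bd f = (\<lambda>y. \<Sum>x\<in>{x. f x \<noteq> 0}. f x * cbd x y)"
  by (simp add: bd_def cbd_def)

lemma spl_form: "spl x \<longleftrightarrow> (\<exists>X b s c M as. x = (X, (b, (s, c) # M) # as))"
  by (cases x rule: spl.cases) auto

lemma issp_form: "issp y \<longleftrightarrow> (\<exists>s X b c M as. y = (s # X, (b, []) # (c, M) # as))"
  by (cases y rule: issp.cases) auto

lemma L1: "spl x \<Longrightarrow> issp (splt x) \<and> unsp (splt x) = x"
  by (auto simp: spl_form)

lemma L2: "issp y \<Longrightarrow> spl (unsp y) \<and> splt (unsp y) = y"
  by (auto simp: issp_form)

lemma L_eq: "issp y \<Longrightarrow> (z = unsp y) \<longleftrightarrow> (spl z \<and> splt z = y)"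
  using L1 L2 by metis

lemma F1: "spl x \<Longrightarrow> face 1 (splt x) = x"
  by (auto simp: spl_form face_def)

lemma face_cons: assumes "1 \<le> i"
  shows "face (Suc i) (s # X, a # as) = (s # fst (face i (X, as)), a # snd (face i (X, as)))"
proof -
  obtain j where j: "i = Suc j" using assms by (cases i) auto
  show ?thesis unfolding j face_def by simp
qed

lemma F2: assumes "spl x" "wf x" "1 \<le> i" "i < length (snd x)"
  shows "face (Suc i) (splt x) = splt (face i x)"
proof -
  obtain X b s c M as where x: "x = (X, (b, (s, c) # M) # as)" using assms(1) unfolding spl_form by blast
  have len: "length X = length as" "1 \<le> length as" using assms(2,3,4) x unfolding wf_def by auto
  obtain X1 X' where X: "X = X1 # X'" using len by (cases X) auto
  obtain a2 as' where as: "as = a2 # as'" using len by (cases as) auto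
  obtain c2 M2 where a2: "a2 = (c2, M2)" by fastforce
  obtain j where j: "i = Suc j" using assms(3) by (cases i) auto
  show ?thesis
  proof (cases j)
    case 0 then show ?thesis using j x X as a2 by (simp add: face_def)
  next
    case (Suc k)
    have e1: "face i x = (X1 # fst (face (Suc k) (X', as)), (b, (s, c) # M) # snd (face (Suc k) (X', as)))"
      unfolding x X j Suc by (rule face_cons) simp
    have e2: "face (Suc i) (splt x) = (s # fst (face i (X, (c, M) # as)), (b, []) # snd (face i (X, (c, M) # as)))"
      unfolding x using face_cons[OF assms(3)] by simp
    have e3: "face i (X, (c, M) # as) = (X1 # fst (face (Suc k) (X', as)), (c, M) # snd (face (Suc k) (X', as)))"
      unfolding X j Suc by (rule face_cons) simp
    show ?thesis using e1 e2 e3 by simp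
  qed
qed
lemma F3: assumes "spl x" "wf x" "1 \<le> i" "i < length (snd x)"
  shows "spl (face i x)"
proof -
  obtain X b s c M as where x: "x = (X, (b, (s, c) # M) # as)" using assms(1) unfolding spl_form by blast
  have len: "length X = length as" "1 \<le> length as" using assms(2,3,4) x unfolding wf_def by auto
  obtain X1 X' where X: "X = X1 # X'" using len by (cases X) auto
  obtain a2 as' where as: "as = a2 # as'" using len by (cases as) auto
  obtain c2 M2 where a2: "a2 = (c2, M2)" by fastforce
  obtain j where j: "i = Suc j" using assms(3) by (cases i) auto
  show ?thesis
  proof (cases j)
    case 0 then show ?thesis using j x X as a2 by (simp add: face_def)
  next
    case (Suc k)
    have e1: "face i x = (X1 # fst (face (Suc k) (X', as)), (b, (s, c) # M) # snd (face (Suc k) (X', as)))"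
      unfolding x X j Suc by (rule face_cons) simp
    show ?thesis unfolding e1 by simp
  qed
qed

lemma F4: assumes "\<not> spl x" "wf x" "2 \<le> i" "i < length (snd x)"
  shows "\<not> spl (face i x)"
proof -
  obtain X a1 as where x: "x = (X, a1 # as)" using assms(3,4)
    by (cases x; cases "snd x") auto
  obtain b where a1: "a1 = (b, [])" using assms(1) x by (cases a1; cases "snd a1") auto
  have len: "length X = length as" using assms(2) x unfolding wf_def by auto
  obtain X1 X' where X: "X = X1 # X'" using len assms(3,4) x by (cases X) auto
  obtain k where i: "i = Suc (Suc k)" using assms(3) by (metis add_2_eq_Suc le_Suc_ex)
  have e1: "face i x = (X1 # fst (face (Suc k) (X', as)), (b, []) # snd (face (Suc k) (X', as)))"
    unfolding x X i a1 by (rule face_cons) simp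
  show ?thesis unfolding e1 by simp
qed

lemma F5: assumes "\<not> spl x" "wf x" "2 \<le> length (snd x)"
  shows "spl (face 1 x) \<and> splt (face 1 x) = x"
proof -
  obtain X a1 a2 as where x: "x = (X, a1 # a2 # as)" using assms(3)
    by (cases x; cases "snd x"; cases "tl (snd x)") auto
  obtain X1 X' where X: "X = X1 # X'" using assms(2,3) x unfolding wf_def by (cases X) auto
  obtain b where a1: "a1 = (b, [])" using assms(1) x by (cases a1; cases "snd a1") auto
  obtain c2 M2 where a2: "a2 = (c2, M2)" by fastforce
  show ?thesis using x X a1 a2 by (simp add: face_def)
qed

lemma F6: assumes "\<not> spl x" "wf x" "2 \<le> length (snd x)"
  shows "issp x"
proof -
  obtain X a1 a2 as where x: "x = (X, a1 # a2 # as)" using assms(3)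
    by (cases x; cases "snd x"; cases "tl (snd x)") auto
  obtain X1 X' where X: "X = X1 # X'" using assms(2,3) x unfolding wf_def by (cases X) auto
  obtain b where a1: "a1 = (b, [])" using assms(1) x by (cases a1; cases "snd a1") auto
  obtain c2 M2 where a2: "a2 = (c2, M2)" by fastforce
  show ?thesis using x X a1 a2 by simp
qed

lemma len_splt: "spl x \<Longrightarrow> length (snd (splt x)) = Suc (length (snd x)) \<and> length (fst (splt x)) = Suc (length (fst x))"
  by (auto simp: spl_form)

lemma cbd_splt: assumes "spl x" "wf x"
  shows "(cbd (splt x) y :: 'k::field) = (if x = y then -1 else 0)
     - (\<Sum>i\<in>{1..<length (snd x)}. if splt (face i x) = y then (-1) ^ i else 0)"
proof -
  define m where "m = length (snd x)"
  have m1: "1 \<le> m" using assms(1) unfolding m_def spl_form by auto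
  define g :: "nat \<Rightarrow> 'k" where "g i = (if face i (splt x) = y then (-1) ^ i else 0)" for i
  have "cbd (splt x) y = (\<Sum>i\<in>{1..<Suc m}. g i)"
    unfolding cbd_def g_def m_def using len_splt[OF assms(1)] by simp
  also have "\<dots> = g 1 + (\<Sum>i\<in>{Suc 1..<Suc m}. g i)"
    by (intro sum.atLeast_Suc_lessThan) (use m1 in simp)
  also have "(\<Sum>i\<in>{Suc 1..<Suc m}. g i) = (\<Sum>i\<in>{1..<m}. g (Suc i))"
    by (rule sum.shift_bounds_Suc_ivl)
  also have "\<dots> = (\<Sum>i\<in>{1..<m}. - (if splt (face i x) = y then (-1) ^ i else 0))"
  proof (rule sum.cong)
    fix i assume "i \<in> {1..<m}"
    then have "face (Suc i) (splt x) = splt (face i x)" using F2[OF assms] m_def by auto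
    then show "g (Suc i) = - (if splt (face i x) = y then (-1) ^ i else 0)"
      unfolding g_def by simp
  qed simp
  also have "g 1 = (if x = y then -1 else 0)" unfolding g_def using F1[OF assms(1)] by simp
  finally show ?thesis unfolding m_def by (simp add: sum_negf)
qed

lemma basis_ge2: assumes "wf x" "2 \<le> length (snd x)"
  shows "(if spl x then - cbd (splt x) y else 0) + (if issp y then - cbd x (unsp y) else 0)
     = (if x = y then 1 else (0 :: 'k::field))"
proof (cases "spl x")
  case True
  define S :: 'k where "S = (\<Sum>i\<in>{1..<length (snd x)}. if splt (face i x) = y then (-1) ^ i else 0)"
  have c1: "(cbd (splt x) y :: 'k) = (if x = y then -1 else 0) - S"
    unfolding S_def by (rule cbd_splt[OF True assms(1)])
  show ?thesis
  proof (cases "issp y")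
    case True2: True
    have "(cbd x (unsp y) :: 'k) = S" unfolding cbd_def S_def
    proof (rule sum.cong)
      fix i assume "i \<in> {1..<length (snd x)}"
      then have "spl (face i x)" using F3[OF True assms(1)] by auto
      then show "(if face i x = unsp y then (-1) ^ i else 0) = (if splt (face i x) = y then (-1) ^ i else 0)"
        using L_eq[OF True2] by simp
    qed simp
    then show ?thesis using c1 True True2 by simp
  next
    case False
    have "S = 0" unfolding S_def
    proof (rule sum.neutral, rule ballI)
      fix i assume "i \<in> {1..<length (snd x)}"
      then have "spl (face i x)" using F3[OF True assms(1)] by auto
      then have "issp (splt (face i x))" using L1 by blast
      then show "(if splt (face i x) = y then (-1) ^ i else 0) = (0::'k)" using False by auto
    qed
    then show ?thesis using c1 True False by simp
  qed
next
  case False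
  show ?thesis
  proof (cases "issp y")
    case True
    define m where "m = length (snd x)"
    define g :: "nat \<Rightarrow> 'k" where "g i = (if face i x = unsp y then (-1) ^ i else 0)" for i
    have "cbd x (unsp y) = (\<Sum>i\<in>{1..<m}. g i)" unfolding cbd_def g_def m_def by simp
    also have "\<dots> = g 1 + (\<Sum>i\<in>{Suc 1..<m}. g i)"
      by (intro sum.atLeast_Suc_lessThan) (use assms(2) m_def in simp)
    also have "(\<Sum>i\<in>{Suc 1..<m}. g i) = 0"
    proof (rule sum.neutral, rule ballI)
      fix i assume "i \<in> {Suc 1..<m}"
      then have "\<not> spl (face i x)" using F4[OF False assms(1)] m_def by auto
      then show "g i = 0" unfolding g_def using L_eq[OF True] by auto
    qed
    also have "g 1 = (if x = y then -1 else 0)"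
      unfolding g_def using L_eq[OF True] F5[OF False assms] by auto
    finally show ?thesis using False True by simp
  next
    case False2: False
    have "x \<noteq> y" using F6[OF False assms] False2 by auto
    then show ?thesis using False False2 by simp
  qed
qed

lemma basis_1: assumes "wf x" "length (snd x) = 1"
  shows "(if spl x then - cbd (splt x) y else 0) + (if issp y then - cbd x (unsp y) else 0)
     = (if spl x \<and> x = y then 1 else (0 :: 'k::field))"
proof -
  have z: "(cbd x z :: 'k) = 0" for z unfolding cbd_def using assms(2) by simp
  have w: "spl x \<Longrightarrow> (cbd (splt x) y :: 'k) = (if x = y then -1 else 0)"
    using cbd_splt[OF _ assms(1), of y] assms(2) by simp
  show ?thesis
  proof (cases "spl x")
    case True then show ?thesis using w z[of "unsp y"] by simp
  next
    case False then show ?thesis using z[of "unsp y"] by simp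
  qed
qed

lemma main_sum:
  fixes f :: "'b cbasis \<Rightarrow> 'k::field"
  assumes fin: "finite {x. f x \<noteq> 0}"
  shows "bd (hh f) y + hh (bd f) y = (\<Sum>x\<in>{x. f x \<noteq> 0}. f x *
     ((if spl x then - cbd (splt x) y else 0) + (if issp y then - cbd x (unsp y) else 0)))"
proof -
  define S where "S = {x. f x \<noteq> 0}"
  define T where "T = {x\<in>S. spl x}"
  have finT: "finite T" using fin unfolding T_def S_def by auto
  have supp: "{z. hh f z \<noteq> 0} = splt ` T"
  proof
    show "{z. hh f z \<noteq> 0} \<subseteq> splt ` T"
    proof
      fix z assume "z \<in> {z. hh f z \<noteq> 0}"
      then have z: "issp z" "f (unsp z) \<noteq> 0" unfolding hh_def by (auto split: if_splits)
      then have "unsp z \<in> T" "splt (unsp z) = z" using L2[OF z(1)] unfolding T_def S_def by auto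
      then show "z \<in> splt ` T" by (metis imageI)
    qed
  next
    show "splt ` T \<subseteq> {z. hh f z \<noteq> 0}"
    proof
      fix z assume "z \<in> splt ` T"
      then obtain x where x: "x \<in> T" "z = splt x" by blast
      then have "spl x" "f x \<noteq> 0" unfolding T_def S_def by auto
      then show "z \<in> {z. hh f z \<noteq> 0}" using L1[of x] x(2) unfolding hh_def by simp
    qed
  qed
  have inj: "inj_on splt T"
  proof (rule inj_onI)
    fix x x' assume "x \<in> T" "x' \<in> T" "splt x = splt x'"
    then have "spl x" "spl x'" unfolding T_def by auto
    then have "x = unsp (splt x)" "x' = unsp (splt x')" using L1 by metis+
    then show "x = x'" using \<open>splt x = splt x'\<close> by simp
  qed
  have "bd (hh f) y = (\<Sum>z\<in>{z. hh f z \<noteq> 0}. hh f z * cbd z y)"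
    by (simp only: bd_cbd)
  also have "\<dots> = (\<Sum>z\<in>splt ` T. hh f z * cbd z y)"
    by (simp only: supp)
  also have "\<dots> = (\<Sum>x\<in>T. hh f (splt x) * cbd (splt x) y)"
    by (simp only: sum.reindex[OF inj] o_def)
  also have "\<dots> = (\<Sum>x\<in>T. f x * (- cbd (splt x) y))"
    by (rule sum.cong) (auto simp: hh_def T_def L1)
  also have "\<dots> = (\<Sum>x\<in>S. if spl x then f x * (- cbd (splt x) y) else 0)"
    unfolding T_def by (rule sum.inter_filter) (simp add: fin S_def)
  also have "\<dots> = (\<Sum>x\<in>S. f x * (if spl x then - cbd (splt x) y else 0))"
    by (rule sum.cong) auto
  finally have A: "bd (hh f) y = (\<Sum>x\<in>S. f x * (if spl x then - cbd (splt x) y else 0))" .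
  have B: "hh (bd f) y = (\<Sum>x\<in>S. f x * (if issp y then - cbd x (unsp y) else 0))"
    by (cases "issp y") (simp_all add: hh_def bd_cbd S_def sum_negf)
  show ?thesis unfolding A B S_def by (simp add: sum.distrib[symmetric] distrib_left)
qed

lemma delta_sum:
  fixes f :: "'a \<Rightarrow> 'k::field"
  assumes "finite {x. f x \<noteq> 0}"
  shows "(\<Sum>x\<in>{x. f x \<noteq> 0}. f x * (if x = y then 1 else 0)) = f y"
proof -
  have "(\<Sum>x\<in>{x. f x \<noteq> 0}. f x * (if x = y then 1 else 0)) = (\<Sum>x\<in>{x. f x \<noteq> 0}. if x = y then f x else 0)"
    by (rule sum.cong) auto
  also have "\<dots> = (if y \<in> {x. f x \<noteq> 0} then f y else 0)" using assms by (simp add: sum.delta')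
  finally show ?thesis by auto
qed

lemma chainsD1: "f \<in> chains n \<Longrightarrow> finite {x. f x \<noteq> 0}"
  unfolding chains_def by blast

lemma chainsD2: assumes "f \<in> chains n" "f x \<noteq> 0" shows "wf x \<and> length (snd x) = n"
proof -
  have "\<forall>x. f x \<noteq> 0 \<longrightarrow> length (fst x) + 1 = n \<and> length (snd x) = n"
    using assms(1) unfolding chains_def by blast
  then have "length (fst x) + 1 = n \<and> length (snd x) = n" using assms(2) by blast
  then show ?thesis unfolding wf_def by simp
qed

lemmas chainsD = chainsD1 chainsD2

lemma hh_chains: assumes "f \<in> chains n" shows "hh f \<in> chains (Suc n)"
proof -
  have sub: "{z. hh f z \<noteq> 0} \<subseteq> splt ` {x. f x \<noteq> 0}"
  proof
    fix z assume "z \<in> {z. hh f z \<noteq> 0}"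
    then have z: "issp z" "f (unsp z) \<noteq> 0" unfolding hh_def by (auto split: if_splits)
    have e: "splt (unsp z) = z" using L2[OF z(1)] by simp
    have "unsp z \<in> {x. f x \<noteq> 0}" using z(2) by simp
    then have "splt (unsp z) \<in> splt ` {x. f x \<noteq> 0}" by (rule imageI)
    then show "z \<in> splt ` {x. f x \<noteq> 0}" unfolding e .
  qed
  have fin: "finite {z. hh f z \<noteq> 0}"
    using finite_subset[OF sub] finite_imageI[OF chainsD(1)[OF assms]] by blast
  have len: "length (fst z) + 1 = Suc n \<and> length (snd z) = Suc n" if "hh f z \<noteq> 0" for z
  proof -
    have z: "issp z" "f (unsp z) \<noteq> 0" using that unfolding hh_def by (auto split: if_splits)
    have w: "wf (unsp z) \<and> length (snd (unsp z)) = n" using chainsD(2)[OF assms z(2)] .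
    have e: "splt (unsp z) = z" "spl (unsp z)" using L2[OF z(1)] by auto
    have "length (snd z) = Suc (length (snd (unsp z)))" "length (fst z) = Suc (length (fst (unsp z)))"
      using len_splt[OF e(2)] unfolding e(1) by auto
    then show ?thesis using w unfolding wf_def by simp
  qed
  show ?thesis unfolding chains_def
  proof (rule CollectI, rule conjI)
    show "finite {x. hh f x \<noteq> 0}" by (rule fin)
  next
    show "\<forall>x. hh f x \<noteq> 0 \<longrightarrow> length (fst x) + 1 = Suc n \<and> length (snd x) = Suc n"
      using len by blast
  qed
qed

lemma hh_zero: "hh (\<lambda>_. 0 :: 'k::field) = (\<lambda>_. 0)"
proof
  fix y show "hh (\<lambda>_. 0 :: 'k::field) y = 0" unfolding hh_def by simp
qed

lemma key_ge2:
  fixes f :: "'b cbasis \<Rightarrow> 'k::field"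
  assumes "f \<in> chains n" "2 \<le> n"
  shows "bd (hh f) y + hh (bd f) y = f y"
proof -
  have "bd (hh f) y + hh (bd f) y = (\<Sum>x\<in>{x. f x \<noteq> 0}. f x * (if x = y then 1 else 0))"
    unfolding main_sum[OF chainsD(1)[OF assms(1)]]
  proof (rule sum.cong)
    fix x assume "x \<in> {x. f x \<noteq> 0}"
    then have "wf x" "2 \<le> length (snd x)" using chainsD(2)[OF assms(1)] assms(2) by auto
    then show "f x * ((if spl x then - cbd (splt x) y else 0) + (if issp y then - cbd x (unsp y) else 0))
       = f x * (if x = y then 1 else 0)" by (simp only: basis_ge2)
  qed simp
  also have "\<dots> = f y" by (rule delta_sum[OF chainsD(1)[OF assms(1)]])
  finally show ?thesis .
qed

lemma bd_deg1: assumes "f \<in> chains 1" shows "bd f = (\<lambda>_. 0)"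
proof
  fix y
  show "bd f y = 0" unfolding bd_cbd
  proof (rule sum.neutral, rule ballI)
    fix x assume "x \<in> {x. f x \<noteq> 0}"
    then have "length (snd x) = 1" using chainsD(2)[OF assms] by auto
    then show "f x * cbd x y = 0" unfolding cbd_def by simp
  qed
qed

lemma mmul_snd: "snd (mmul s a a') \<noteq> []"
  by (cases a; cases a') simp

lemma face1_ne: "face 1 x \<noteq> ([], [(b, [])])"
proof
  assume a: "face 1 x = ([], [(b, [])])"
  have "snd (face 1 x) = mmul (fst x ! 0) (snd x ! 0) (snd x ! 1) # drop (Suc (Suc 0)) (snd x)"
    unfolding face_def by simp
  then have "mmul (fst x ! 0) (snd x ! 0) (snd x ! 1) = (b, [])" using a by simp
  then show False using mmul_snd[of "fst x ! 0" "snd x ! 0" "snd x ! 1"] by simp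
qed

theorem theorem5p6:
  shows "(\<forall>n\<ge>2. \<forall>f\<in>(chains n :: ('b cbasis \<Rightarrow> 'k::field) set).
            bd f = (\<lambda>_. 0) \<longrightarrow> (\<exists>g\<in>chains (Suc n). bd g = f))
       \<and> (\<forall>f\<in>(chains 1 :: ('b cbasis \<Rightarrow> 'k::field) set).
            \<exists>!v :: 'b \<Rightarrow> 'k. finite {b. v b \<noteq> 0} \<and> (\<exists>g\<in>chains 2. f - inclV v = bd g))"
proof (intro conjI allI impI ballI)
  fix n :: nat and f :: "'b cbasis \<Rightarrow> 'k"
  assume n: "2 \<le> n" and f: "f \<in> chains n" and cyc: "bd f = (\<lambda>_. 0)"
  show "\<exists>g\<in>chains (Suc n). bd g = f"
  proof (intro bexI)
    show "hh f \<in> chains (Suc n)" by (rule hh_chains[OF f])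
    show "bd (hh f) = f"
    proof
      fix y
      have "hh (bd f) y = 0" unfolding cyc hh_def by simp
      then show "bd (hh f) y = f y" using key_ge2[OF f n, of y] by simp
    qed
  qed
next
  fix f :: "'b cbasis \<Rightarrow> 'k"
  assume f: "f \<in> chains 1"
  define v where "v b = f ([], [(b, [])])" for b
  have finv: "finite {b. v b \<noteq> 0}"
  proof -
    have "{b. v b \<noteq> 0} = (\<lambda>b. ([] :: cube list, [(b, [] :: (cube \<times> 'b) list)])) -` {x. f x \<noteq> 0}"
      unfolding v_def by auto
    moreover have "finite \<dots>"
      by (rule finite_vimageI) (use chainsD(1)[OF f] in \<open>auto simp: inj_def\<close>)
    ultimately show ?thesis by simp
  qed
  have ex: "f - inclV v = bd (hh f)"
  proof
    fix y
    have "hh (bd f) y = 0" unfolding bd_deg1[OF f] hh_def by simp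
    then have "bd (hh f) y = bd (hh f) y + hh (bd f) y" by simp
    also have "\<dots> = (\<Sum>x\<in>{x. f x \<noteq> 0}. f x * (if spl x \<and> x = y then 1 else 0))"
      unfolding main_sum[OF chainsD(1)[OF f]]
    proof (rule sum.cong)
      fix x assume "x \<in> {x. f x \<noteq> 0}"
      then have "wf x" "length (snd x) = 1" using chainsD(2)[OF f] by auto
      then show "f x * ((if spl x then - cbd (splt x) y else 0) + (if issp y then - cbd x (unsp y) else 0))
         = f x * (if spl x \<and> x = y then 1 else 0)" by (simp only: basis_1)
    qed simp
    also have "\<dots> = (\<Sum>x\<in>{x. f x \<noteq> 0}. (\<lambda>x. if spl x then f x else 0) x * (if x = y then 1 else 0))"
      by (rule sum.cong) auto
    also have "\<dots> = (if spl y then f y else 0)"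
    proof -
      have "finite {x. (if spl x then f x else 0) \<noteq> 0}"
        by (rule finite_subset[OF _ chainsD(1)[OF f]]) auto
      then have "(\<Sum>x\<in>{x. (if spl x then f x else 0) \<noteq> 0}. (if spl x then f x else 0) * (if x = y then 1 else 0))
          = (if spl y then f y else 0)" by (rule delta_sum)
      moreover have "(\<Sum>x\<in>{x. f x \<noteq> 0}. (\<lambda>x. if spl x then f x else 0) x * (if x = y then 1 else 0))
          = (\<Sum>x\<in>{x. (if spl x then f x else 0) \<noteq> 0}. (if spl x then f x else 0) * (if x = y then 1 else 0))"
        by (rule sum.mono_neutral_right) (use chainsD(1)[OF f] in auto)
      ultimately show ?thesis by simp
    qed
    also have "\<dots> = (f - inclV v) y"
    proof (cases "f y = 0")
      case True
      then show ?thesis unfolding inclV_def v_def by (cases y) auto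
    next
      case False
      then have "wf y" "length (snd y) = 1" using chainsD(2)[OF f] by auto
      then obtain b L where y: "y = ([], [(b, L)])" unfolding wf_def
        by (cases y) (auto simp: length_Suc_conv)
      show ?thesis unfolding y inclV_def v_def by (cases L) auto
    qed
    finally show "(f - inclV v) y = bd (hh f) y" by simp
  qed
  show "\<exists>!v :: 'b \<Rightarrow> 'k. finite {b. v b \<noteq> 0} \<and> (\<exists>g\<in>chains 2. f - inclV v = bd g)"
  proof (rule ex1I)
    show "finite {b. v b \<noteq> 0} \<and> (\<exists>g\<in>chains 2. f - inclV v = bd g)"
    proof (intro conjI bexI)
      show "hh f \<in> chains 2" using hh_chains[OF f] by (simp add: numeral_2_eq_2)
    qed (use finv ex in auto)
  next
    fix v' :: "'b \<Rightarrow> 'k"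
    assume "finite {b. v' b \<noteq> 0} \<and> (\<exists>g\<in>chains 2. f - inclV v' = bd g)"
    then obtain g where g: "g \<in> chains 2" "f - inclV v' = bd g" by auto
    show "v' = v"
    proof
      fix b
      define y0 :: "'b cbasis" where "y0 = ([], [(b, [])])"
      have "bd g y0 = 0" unfolding bd_cbd
      proof (rule sum.neutral, rule ballI)
        fix x assume "x \<in> {x. g x \<noteq> 0}"
        then have "length (snd x) = 2" using chainsD(2)[OF g(1)] by auto
        then have r: "{1..<length (snd x)} = {1::nat}" by auto
        have "cbd x y0 = (if face 1 x = y0 then -1 else (0::'k))" unfolding cbd_def r by simp
        moreover have "face 1 x \<noteq> y0" unfolding y0_def by (rule face1_ne)
        ultimately show "g x * cbd x y0 = 0" by simp
      qed
      then have "(f - inclV v') y0 = 0" using g(2) by simp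
      then show "v' b = v b" unfolding y0_def v_def inclV_def by simp
    qed
  qed
qed

end
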